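(* Let $\mathcal{M}$ be a Ptolemy Möbius structure on a set $X$. Then there exists a bounded metric $d\in\mathcal{M}$, i.e. $d\in\mathcal{M}$ with $\Omega(d)=\emptyset$ and $\sup_{x,y\in X}d(x,y)<\infty$.
   Context: An extended metric on a set $X$ (with at least two points) is a map $d:X\times X\to[0,\infty]$ such that for some subset $\Omega(d)\subset X$ with at most one element, $d$ is a finite metric on $X\setminus\Omega(d)$, $d(x,\omega)=\infty$ for $x\notin\Omega(d)$, $\omega\in\Omega(d)$, and $d(\omega,\omega)=0$ ($\omega$ is written $\infty$). A quadruple is admissible if no entry occurs three or four times. $\mathrm{crt}(x,y,z,w)=(d(x,y)d(z,w):d(x,z)d(y,w):d(x,w)d(y,z))\in\mathbb{R}P^2$, with $\mathrm{crt}(x,y,z,\infty)=(d(x,y):d(x,z):d(y,z))$ and $\mathrm{crt}(x,y,\infty,\infty)=(0:1:1)$ (analogously for other positions). Extended metrics are Möbius equivalent if they have the same $\mathrm{crt}$ on all admissible quadruples; a Möbius structure is a nonempty, maximal set of pairwise Möbius equivalent extended metrics on $X$. A Möbius structure is Ptolemy if its metrics satisfy $d(x,y)d(z,w)\le d(x,z)d(y,w)+d(x,w)d(y,z)$ for all quadruples (equivalently the entries of every $\mathrm{crt}$ satisfy the triangle inequality). *)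

theory Defs
  imports "HOL-Analysis.Analysis"
begin

text \<open>The set X is the whole type 'a (assumed to have at least two points).
  Distances take values in [0,\<infinity>], modelled in ereal.\<close>

definition ext_metric_with :: "('a \<Rightarrow> 'a \<Rightarrow> ereal) \<Rightarrow> 'a set \<Rightarrow> bool" where
  "ext_metric_with d \<Omega> \<longleftrightarrow>
     (\<Omega> = {} \<or> (\<exists>\<omega>. \<Omega> = {\<omega>})) \<and>
     (\<forall>x y. x \<notin> \<Omega> \<longrightarrow> y \<notin> \<Omega> \<longrightarrow>
        0 \<le> d x y \<and> d x y < \<infinity> \<and> (d x y = 0 \<longleftrightarrow> x = y) \<and> d x y = d y x) \<and>
     (\<forall>x y z. x \<notin> \<Omega> \<longrightarrow> y \<notin> \<Omega> \<longrightarrow> z \<notin> \<Omega> \<longrightarrow> d x z \<le> d x y + d y z) \<and>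
     (\<forall>x \<omega>. x \<notin> \<Omega> \<longrightarrow> \<omega> \<in> \<Omega> \<longrightarrow> d x \<omega> = \<infinity> \<and> d \<omega> x = \<infinity>) \<and>
     (\<forall>\<omega>\<in>\<Omega>. d \<omega> \<omega> = 0)"

definition extended_metric :: "('a \<Rightarrow> 'a \<Rightarrow> ereal) \<Rightarrow> bool" where
  "extended_metric d \<longleftrightarrow> (\<exists>\<Omega>. ext_metric_with d \<Omega>)"

definition Omega :: "('a \<Rightarrow> 'a \<Rightarrow> ereal) \<Rightarrow> 'a set" where
  "Omega d = (THE \<Omega>. ext_metric_with d \<Omega>)"

text \<open>Distance used in cross ratios: factors involving the infinite point are
  cancelled (replaced by 1), and d(\<infinity>,\<infinity>)=0; this reproduces
  crt(x,y,z,\<infinity>) = (d(x,y):d(x,z):d(y,z)) and crt(x,y,\<infinity>,\<infinity>) = (0:1:1), etc.\<close>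
definition crt_dist :: "('a \<Rightarrow> 'a \<Rightarrow> ereal) \<Rightarrow> 'a \<Rightarrow> 'a \<Rightarrow> real" where
  "crt_dist d x y =
     (if x = y then 0 else if x \<in> Omega d \<or> y \<in> Omega d then 1 else real_of_ereal (d x y))"

definition crt :: "('a \<Rightarrow> 'a \<Rightarrow> ereal) \<Rightarrow> 'a \<Rightarrow> 'a \<Rightarrow> 'a \<Rightarrow> 'a \<Rightarrow> real \<times> real \<times> real" where
  "crt d x y z w =
     (crt_dist d x y * crt_dist d z w, crt_dist d x z * crt_dist d y w,
      crt_dist d x w * crt_dist d y z)"

definition proj_eq :: "real \<times> real \<times> real \<Rightarrow> real \<times> real \<times> real \<Rightarrow> bool" where
  "proj_eq p q \<longleftrightarrow> p \<noteq> (0,0,0) \<and> q \<noteq> (0,0,0) \<and>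
     (\<exists>t. t \<noteq> 0 \<and> fst q = t * fst p \<and> fst (snd q) = t * fst (snd p) \<and>
          snd (snd q) = t * snd (snd p))"

definition admissible :: "'a \<Rightarrow> 'a \<Rightarrow> 'a \<Rightarrow> 'a \<Rightarrow> bool" where
  "admissible x y z w \<longleftrightarrow>
     \<not> (x = y \<and> y = z) \<and> \<not> (x = y \<and> y = w) \<and> \<not> (x = z \<and> z = w) \<and> \<not> (y = z \<and> z = w)"

definition mobius_equiv :: "('a \<Rightarrow> 'a \<Rightarrow> ereal) \<Rightarrow> ('a \<Rightarrow> 'a \<Rightarrow> ereal) \<Rightarrow> bool" where
  "mobius_equiv d d' \<longleftrightarrow>
     (\<forall>x y z w. admissible x y z w \<longrightarrow> proj_eq (crt d x y z w) (crt d' x y z w))"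

definition mobius_structure :: "('a \<Rightarrow> 'a \<Rightarrow> ereal) set \<Rightarrow> bool" where
  "mobius_structure M \<longleftrightarrow>
     M \<noteq> {} \<and> (\<forall>d\<in>M. extended_metric d) \<and>
     (\<forall>d\<in>M. \<forall>d'\<in>M. mobius_equiv d d') \<and>
     (\<forall>d. extended_metric d \<and> (\<forall>d'\<in>M. mobius_equiv d d') \<longrightarrow> d \<in> M)"

definition ptolemy_mobius_structure :: "('a \<Rightarrow> 'a \<Rightarrow> ereal) set \<Rightarrow> bool" where
  "ptolemy_mobius_structure M \<longleftrightarrow>
     mobius_structure M \<and>
     (\<forall>d\<in>M. \<forall>x y z w. admissible x y z w \<longrightarrow>
        (case crt d x y z w of (a, b, c) \<Rightarrow> a \<le> b + c \<and> b \<le> a + c \<and> c \<le> a + b))"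

end

theory Submission
  imports Defs
begin

theorem lemma2p3:
  fixes M :: "('a \<Rightarrow> 'a \<Rightarrow> ereal) set"
  assumes "\<exists>x y :: 'a. x \<noteq> y"
    and "ptolemy_mobius_structure M"
  shows "\<exists>d\<in>M. Omega d = {} \<and> (SUP p\<in>UNIV. d (fst p) (snd p)) < \<infinity>"
proof -
  have MS: "mobius_structure M" using assms(2) unfolding ptolemy_mobius_structure_def by blast
  obtain d where dM: "d \<in> M" using MS unfolding mobius_structure_def by blast
  have emd: "extended_metric d" using MS dM unfolding mobius_structure_def by blast
  then obtain \<Omega> where em: "ext_metric_with d \<Omega>" unfolding extended_metric_def by blast
  define D where "D = crt_dist d"
  have D0: "D x x = 0" for x by (simp add: D_def crt_dist_def)
  have dnn: "0 \<le> d x y" if "x \<noteq> y" for x y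
  proof (cases "x \<in> \<Omega> \<or> y \<in> \<Omega>")
    case False thus ?thesis using em unfolding ext_metric_with_def by blast
  next
    case True
    have "\<Omega> = {} \<or> (\<exists>\<omega>. \<Omega> = {\<omega>})" using em unfolding ext_metric_with_def by blast
    then obtain \<omega> where om: "\<Omega> = {\<omega>}" using True by blast
    show ?thesis
    proof (cases "x \<in> \<Omega>")
      case True
      hence "y \<notin> \<Omega>" using om that by auto
      hence "d x y = \<infinity>" using em True unfolding ext_metric_with_def by blast
      thus ?thesis by simp
    next
      case False
      hence "y \<in> \<Omega>" using \<open>x \<in> \<Omega> \<or> y \<in> \<Omega>\<close> by blast
      hence "d x y = \<infinity>" using em False unfolding ext_metric_with_def by blast
      thus ?thesis by simp
    qed
  qed
  have Dnn: "0 \<le> D x y" for x y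
    using dnn[of x y] by (auto simp: D_def crt_dist_def real_of_ereal_pos)
  have pt: "D x y * D z w \<le> D x z * D y w + D x w * D y z \<and>
            D x z * D y w \<le> D x y * D z w + D x w * D y z \<and>
            D x w * D y z \<le> D x y * D z w + D x z * D y w"
    if "admissible x y z w" for x y z w
    using assms(2) that dM unfolding ptolemy_mobius_structure_def crt_def D_def by auto
  have selfeq: "mobius_equiv d d" using MS dM unfolding mobius_structure_def by blast
  have nz: "crt d x y z w \<noteq> (0,0,0)" if "admissible x y z w" for x y z w
    using selfeq that unfolding mobius_equiv_def proj_eq_def by blast
  have Dpos: "0 < D x y" if "x \<noteq> y" for x y
  proof -
    have adm: "admissible x y x y" using that by (auto simp: admissible_def)
    have "D x y \<noteq> 0"
    proof
      assume "D x y = 0"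
      hence "crt d x y x y = (0,0,0)" by (simp add: crt_def D_def[symmetric] D0)
      thus False using nz[OF adm] by simp
    qed
    thus ?thesis using Dnn[of x y] by simp
  qed
  have Dle: "D y x \<le> D x y" if "x \<noteq> y" for x y
  proof -
    have adm: "admissible x y x y" using that by (auto simp: admissible_def)
    have "D x y * D y x \<le> D x y * D x y" using pt[OF adm] by (simp add: D0)
    thus ?thesis using Dpos[OF that] by simp
  qed
  have Dsym: "D x y = D y x" for x y
    by (cases "x = y") (use Dle in \<open>auto intro: antisym\<close>)
  obtain u0 u1 :: 'a where op: "u0 \<noteq> u1" using assms(1) by blast
  define f where "f y = D y u0 + D y u1" for y
  have fpos: "0 < f y" for y
  proof (cases "y = u0")
    case True thus ?thesis using Dpos[of y u1] op Dnn[of y u0] by (simp add: f_def)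
  next
    case False thus ?thesis using Dpos[of y u0] Dnn[of y u1] by (simp add: f_def)
  qed
  have core: "D x z * f y \<le> D x y * f z + D y z * f x" for x y z
  proof (cases "x = z \<or> x = y \<or> y = z")
    case True
    thus ?thesis using Dnn[of x y] Dnn[of y z] fpos[of x] fpos[of z] D0
      by (auto simp: algebra_simps)
  next
    case False
    hence a1: "admissible x z y u0" and a2: "admissible x z y u1" by (auto simp: admissible_def)
    have "D x z * D y u0 \<le> D x y * D z u0 + D x u0 * D z y" using pt[OF a1] by blast
    moreover have "D x z * D y u1 \<le> D x y * D z u1 + D x u1 * D z y" using pt[OF a2] by blast
    ultimately show ?thesis using Dsym[of z y] by (simp add: f_def algebra_simps)
  qed
  define r where "r x y = D x y / (f x * f y)" for x y
  have rnn: "0 \<le> r x y" for x y using Dnn[of x y] fpos[of x] fpos[of y] by (simp add: r_def)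
  have r0: "r x y = 0 \<longleftrightarrow> x = y" for x y
    using Dpos[of x y] fpos[of x] fpos[of y] by (cases "x = y") (auto simp: r_def D0)
  have rsym: "r x y = r y x" for x y by (simp add: r_def Dsym mult.commute)
  have rtri: "r x z \<le> r x y + r y z" for x y z
  proof -
    have fx: "0 < f x" and fy: "0 < f y" and fz: "0 < f z" using fpos by auto
    have "r x y + r y z = (D x y * f z + D y z * f x) / (f x * f y * f z)"
      using fx fy fz by (simp add: r_def field_simps)
    moreover have "r x z = (D x z * f y) / (f x * f y * f z)"
      using fx fy fz by (simp add: r_def field_simps)
    moreover have "0 \<le> f x * f y * f z" using fx fy fz by simp
    moreover have "(D x z * f y) / (f x * f y * f z) \<le> (D x y * f z + D y z * f x) / (f x * f y * f z)"
      using fx fy fz core by (intro divide_right_mono) auto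
    ultimately show ?thesis by simp
  qed
  have Dop: "0 < D u0 u1" using Dpos op by blast
  have rbd: "r x y \<le> 1 / D u0 u1" for x y
  proof (cases "x = y")
    case True thus ?thesis using Dop by (simp add: r_def D0)
  next
    case False
    hence adm: "admissible x y u0 u1" using op by (auto simp: admissible_def)
    have "D x y * D u0 u1 \<le> D x u0 * D y u1 + D x u1 * D y u0" using pt[OF adm] by blast
    also have "\<dots> \<le> f x * f y"
      using Dnn[of x u0] Dnn[of y u1] Dnn[of x u1] Dnn[of y u0]
      by (simp add: f_def algebra_simps)
    finally have "D x y * D u0 u1 \<le> f x * f y" .
    thus ?thesis using fpos[of x] fpos[of y] Dop
      by (simp add: r_def field_simps)
  qed
  define d' where "d' = (\<lambda>x y. ereal (r x y))"
  have em': "ext_metric_with d' {}"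
    unfolding ext_metric_with_def d'_def using rnn r0 by (auto intro: rtri rsym)
  have Om: "Omega d' = {}"
    unfolding Omega_def
  proof (rule the_equality)
    show "ext_metric_with d' {}" by (rule em')
  next
    fix \<Omega>' assume h: "ext_metric_with d' \<Omega>'"
    show "\<Omega>' = {}"
    proof (rule ccontr)
      assume "\<Omega>' \<noteq> {}"
      moreover have "\<Omega>' = {} \<or> (\<exists>\<omega>. \<Omega>' = {\<omega>})" using h unfolding ext_metric_with_def by (rule conjunct1)
      ultimately obtain \<omega> where om: "\<Omega>' = {\<omega>}" by blast
      obtain x where "x \<noteq> \<omega>" using op by metis
      hence "d' x \<omega> = \<infinity>" using h om unfolding ext_metric_with_def by blast
      thus False by (simp add: d'_def)
    qed
  qed
  have cd': "crt_dist d' x y = r x y" for x y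
    by (cases "x = y") (simp_all add: crt_dist_def Om D0 r_def, simp add: d'_def r_def)
  have crt': "crt d' x y z w = (c * fst (crt d x y z w), c * fst (snd (crt d x y z w)),
      c * snd (snd (crt d x y z w)))" if "c = 1 / (f x * f y * f z * f w)" for x y z w c
    using fpos[of x] fpos[of y] fpos[of z] fpos[of w] that
    by (simp add: crt_def cd' r_def D_def[symmetric] field_simps)
  have d'M: "d' \<in> M"
  proof -
    have "extended_metric d'" using em' unfolding extended_metric_def by blast
    moreover have "mobius_equiv d' d''" if d''M: "d'' \<in> M" for d''
      unfolding mobius_equiv_def
    proof (intro allI impI)
      fix x y z w :: 'a assume adm: "admissible x y z w"
      have "mobius_equiv d d''" using MS dM d''M unfolding mobius_structure_def by blast
      hence pe: "proj_eq (crt d x y z w) (crt d'' x y z w)" using adm unfolding mobius_equiv_def by blast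
      then obtain t where t: "t \<noteq> 0" "fst (crt d'' x y z w) = t * fst (crt d x y z w)"
        "fst (snd (crt d'' x y z w)) = t * fst (snd (crt d x y z w))"
        "snd (snd (crt d'' x y z w)) = t * snd (snd (crt d x y z w))"
        unfolding proj_eq_def by blast
      define c where "c = 1 / (f x * f y * f z * f w)"
      have cpos: "0 < c" using fpos[of x] fpos[of y] fpos[of z] fpos[of w] by (simp add: c_def)
      have C: "crt d' x y z w = (c * fst (crt d x y z w), c * fst (snd (crt d x y z w)),
        c * snd (snd (crt d x y z w)))" using crt'[OF c_def] .
      have nz1: "crt d x y z w \<noteq> (0,0,0)" using pe unfolding proj_eq_def by blast
      have nz2: "crt d'' x y z w \<noteq> (0,0,0)" using pe unfolding proj_eq_def by blast
      have nz3: "crt d' x y z w \<noteq> (0,0,0)"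
      proof
        assume "crt d' x y z w = (0,0,0)"
        hence "crt d x y z w = (0,0,0)" using C cpos by (simp add: prod_eq_iff)
        thus False using nz1 by blast
      qed
      show "proj_eq (crt d' x y z w) (crt d'' x y z w)"
        unfolding proj_eq_def
      proof (intro conjI exI[of _ "t / c"])
        show "crt d' x y z w \<noteq> (0,0,0)" by (rule nz3)
        show "crt d'' x y z w \<noteq> (0,0,0)" by (rule nz2)
        show "t / c \<noteq> 0" using t cpos by simp
      qed (use t cpos C in simp_all)
    qed
    ultimately show ?thesis using MS unfolding mobius_structure_def by blast
  qed
  have "(SUP q\<in>UNIV. d' (fst q) (snd q)) \<le> ereal (1 / D u0 u1)"
    by (rule SUP_least) (simp add: d'_def rbd)
  also have "\<dots> < \<infinity>" by simp
  finally show ?thesis using d'M Om by blast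
qed

end
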